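(* Let $p,q$ be smooth strictly positive probability densities on $[0,1]$ with CDFs $F_p,F_q$ and inverse CDFs $F_p^{-1},F_q^{-1}:[0,1]\to[0,1]$. (i) For $V\in C^\infty([0,1])$ and $\mathcal V(p)=\int_0^1V p\,dx$: $\mathrm D_{\mathrm T,\mathcal V}(p\|q)=\int_0^1\mathrm D_V(F_p^{-1}(s)\|F_q^{-1}(s))\,ds$, with $\mathrm D_V(z_1\|z_2)=V(z_1)-V(z_2)-V'(z_2)(z_1-z_2)$. (ii) For $\tilde W\in C^\infty([-1,1])$ even and $\mathcal W(p)=\tfrac12\int_0^1\!\!\int_0^1\tilde W(x-\tilde x)p(x)p(\tilde x)\,dx\,d\tilde x$: $\mathrm D_{\mathrm T,\mathcal W}(p\|q)=\tfrac12\int_0^1\!\!\int_0^1\mathrm D_{\tilde W}\big(F_p^{-1}(s)-F_p^{-1}(\tilde s)\,\|\,F_q^{-1}(s)-F_q^{-1}(\tilde s)\big)ds\,d\tilde s$, where $\mathrm D_{\tilde W}$ is defined as $\mathrm D_V$ with $\tilde W$ in place of $V$. (iii) For $U:(0,\infty)\to\mathbb R$ of class $C^2$ and $\mathcal U(p)=\int_0^1U(p(x))dx$, set $\tilde U(z)=zU(1/z)$ for $z>0$. Then $\mathrm D_{\mathrm T,\mathcal U}(p\|q)=\int_0^1\mathrm D_{\tilde U}\big((F_p^{-1})'(s)\,\|\,(F_q^{-1})'(s)\big)ds$, with $\mathrm D_{\tilde U}(z_1\|z_2)=\tilde U(z_1)-\tilde U(z_2)-\tilde U'(z_2)(z_1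-z_2)$.
   Context: On $[0,1]$ the optimal transport map from $q$ to $p$ is the monotone map $T=F_p^{-1}\circ F_q$, which satisfies $p(T(x))T'(x)=q(x)$. For a smooth functional $\mathcal F$ on such densities with $L^2$ first variation $\frac{\delta\mathcal F}{\delta q}(q)(x)$ (for $\mathcal V,\mathcal W,\mathcal U$ these are $V(x)$, $\int_0^1\tilde W(x-\tilde x)q(\tilde x)d\tilde x$, $U'(q(x))$), the transport Bregman divergence is $$\mathrm D_{\mathrm T,\mathcal F}(p\|q)=\mathcal F(p)-\mathcal F(q)-\int_0^1\frac{d}{dx}\Big(\frac{\delta\mathcal F}{\delta q}(q)(x)\Big)\,(T(x)-x)\,q(x)\,dx .$$ *)

theory Defs
  imports "HOL-Analysis.Analysis"
begin

definition smooth_on :: "real set \<Rightarrow> (real \<Rightarrow> real) \<Rightarrow> bool" where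
  "smooth_on S f \<longleftrightarrow> (\<exists>D :: nat \<Rightarrow> real \<Rightarrow> real.
      (\<forall>x\<in>S. D 0 x = f x) \<and>
      (\<forall>n. \<forall>x\<in>S. (D n has_real_derivative D (Suc n) x) (at x within S)))"

definition C2_on :: "real set \<Rightarrow> (real \<Rightarrow> real) \<Rightarrow> bool" where
  "C2_on S f \<longleftrightarrow> (\<exists>f1 f2 :: real \<Rightarrow> real.
      (\<forall>x\<in>S. (f has_real_derivative f1 x) (at x within S)) \<and>
      (\<forall>x\<in>S. (f1 has_real_derivative f2 x) (at x within S)) \<and>
      continuous_on S f2)"

definition smooth_pos_density :: "(real \<Rightarrow> real) \<Rightarrow> bool" where
  "smooth_pos_density p \<longleftrightarrow> smooth_on {0..1} p \<and> (\<forall>x\<in>{0..1}. p x > 0)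
      \<and> integral {0..1} p = 1"

definition cdf :: "(real \<Rightarrow> real) \<Rightarrow> real \<Rightarrow> real" where
  "cdf p x = integral {0..x} p"

definition inv_cdf :: "(real \<Rightarrow> real) \<Rightarrow> real \<Rightarrow> real" where
  "inv_cdf p = the_inv_into {0..1} (cdf p)"

definition ot_map :: "(real \<Rightarrow> real) \<Rightarrow> (real \<Rightarrow> real) \<Rightarrow> real \<Rightarrow> real" where
  "ot_map p q x = inv_cdf p (cdf q x)"

text \<open>Transport Bregman divergence of a functional F with L^2 first variation dF
  (dF q x = first variation of F at q, evaluated at x).\<close>
definition transport_bregman ::
  "((real \<Rightarrow> real) \<Rightarrow> real) \<Rightarrow> ((real \<Rightarrow> real) \<Rightarrow> real \<Rightarrow> real)
   \<Rightarrow> (real \<Rightarrow> real) \<Rightarrow> (real \<Rightarrow> real) \<Rightarrow> real" where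
  "transport_bregman F dF p q =
     F p - F q - integral {0..1} (\<lambda>x. deriv (dF q) x * (ot_map p q x - x) * q x)"

definition bregman :: "(real \<Rightarrow> real) \<Rightarrow> real \<Rightarrow> real \<Rightarrow> real" where
  "bregman f z1 z2 = f z1 - f z2 - deriv f z2 * (z1 - z2)"

definition potential_energy :: "(real \<Rightarrow> real) \<Rightarrow> (real \<Rightarrow> real) \<Rightarrow> real" where
  "potential_energy V p = integral {0..1} (\<lambda>x. V x * p x)"

definition potential_fv :: "(real \<Rightarrow> real) \<Rightarrow> (real \<Rightarrow> real) \<Rightarrow> real \<Rightarrow> real" where
  "potential_fv V q x = V x"

definition interaction_energy :: "(real \<Rightarrow> real) \<Rightarrow> (real \<Rightarrow> real) \<Rightarrow> real" where
  "interaction_energy W p =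
     1/2 * integral {0..1} (\<lambda>x. integral {0..1} (\<lambda>y. W (x - y) * p x * p y))"

definition interaction_fv :: "(real \<Rightarrow> real) \<Rightarrow> (real \<Rightarrow> real) \<Rightarrow> real \<Rightarrow> real" where
  "interaction_fv W q x = integral {0..1} (\<lambda>y. W (x - y) * q y)"

definition internal_energy :: "(real \<Rightarrow> real) \<Rightarrow> (real \<Rightarrow> real) \<Rightarrow> real" where
  "internal_energy U p = integral {0..1} (\<lambda>x. U (p x))"

definition internal_fv :: "(real \<Rightarrow> real) \<Rightarrow> (real \<Rightarrow> real) \<Rightarrow> real \<Rightarrow> real" where
  "internal_fv U q x = deriv U (q x)"

end

theory Submission
  imports Defs
begin


lemma smooth_D1:
  assumes "smooth_on S f"
  shows "\<exists>f1. (\<forall>x\<in>S. (f has_real_derivative f1 x) (at x within S)) \<and> continuous_on S f1 \<and> continuous_on S f"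
proof -
  obtain D where D0: "\<forall>x\<in>S. D 0 x = f x" and DS: "\<forall>n. \<forall>x\<in>S. (D n has_real_derivative D (Suc n) x) (at x within S)"
    using assms unfolding smooth_on_def by blast
  have d: "(f has_real_derivative D 1 x) (at x within S)" if xS: "x \<in> S" for x
  proof -
    have "(D 0 has_real_derivative D 1 x) (at x within S)" using DS xS by (metis One_nat_def)
    then show ?thesis
      by (rule has_field_derivative_transform_within[where d=1]) (use D0 xS in auto)
  qed
  have "continuous_on S (D 1)"
  proof (rule DERIV_continuous_on)
    fix x assume "x \<in> S"
    then show "(D 1 has_real_derivative D 2 x) (at x within S)"
      using DS by (metis numeral_2_eq_2 One_nat_def)
  qed
  moreover have "continuous_on S f" using d by (intro DERIV_continuous_on) auto
  ultimately show ?thesis using d by blast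
qed

lemma within_interior_at:
  assumes "(f has_real_derivative d) (at x within {a..b})" "x \<in> {a<..<b}"
  shows "(f has_real_derivative d) (at x)"
  using assms at_within_interior[of x "{a..b}"] by simp

lemma int01_cong:
  assumes "\<And>x. x \<in> {0<..<1} \<Longrightarrow> f x = g x"
  shows "integral {0..1::real} f = integral {0..1} g"
proof (rule integral_spike[of "{0,1}"])
  show "negligible {0::real,1}" by simp
qed (use assms in auto)

lemma density_cdf:
  assumes "smooth_pos_density p"
  shows "\<And>x. x \<in> {0..1} \<Longrightarrow> (cdf p has_real_derivative p x) (at x within {0..1})"
    and "cdf p 0 = 0" and "cdf p 1 = 1"
    and "\<And>a b. 0 \<le> a \<Longrightarrow> a < b \<Longrightarrow> b \<le> 1 \<Longrightarrow> cdf p a < cdf p b"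
proof -
  from assms have pc: "continuous_on {0..1} p" and pos: "\<forall>x\<in>{0..1}. p x > 0" and i1: "integral {0..1} p = 1"
    unfolding smooth_pos_density_def using smooth_D1 by blast+
  show d: "(cdf p has_real_derivative p x) (at x within {0..1})" if "x \<in> {0..1}" for x
    unfolding cdf_def[abs_def] by (rule integral_has_real_derivative[OF pc that])
  show "cdf p 0 = 0" by (simp add: cdf_def)
  show "cdf p 1 = 1" using i1 by (simp add: cdf_def)
  fix a b :: real assume ab: "0 \<le> a" "a < b" "b \<le> 1"
  have "\<exists>x\<in>{a..b}. cdf p b - cdf p a = (\<lambda>h. p x * h) (b - a)"
  proof (rule mvt_very_simple[where f' = "\<lambda>x h. p x * h"])
    fix x assume "a \<le> x" "x \<le> b"
    with ab have "x \<in> {0..1}" by auto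
    from DERIV_subset[OF d[OF this], of "{a..b}"] ab
    show "(cdf p has_derivative (\<lambda>h. p x * h)) (at x within {a..b})"
      by (simp add: has_field_derivative_def)
  qed (use ab in auto)
  then obtain x where "x \<in> {a..b}" "cdf p b - cdf p a = p x * (b - a)" by auto
  moreover have "p x > 0" using pos \<open>x \<in> {a..b}\<close> ab by auto
  ultimately show "cdf p a < cdf p b" using ab by (smt (verit) mult_pos_pos)
qed

lemma density_inv:
  assumes "smooth_pos_density p"
  shows "\<And>s. s \<in> {0..1} \<Longrightarrow> inv_cdf p s \<in> {0..1} \<and> cdf p (inv_cdf p s) = s"
    and "\<And>x. x \<in> {0..1} \<Longrightarrow> inv_cdf p (cdf p x) = x"
    and "\<And>s. s \<in> {0<..<1} \<Longrightarrow> inv_cdf p s \<in> {0<..<1}"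
    and "continuous_on {0..1} (inv_cdf p)"
    and "continuous_on {0..1} (cdf p)"
    and "\<And>x. x \<in> {0..1} \<Longrightarrow> cdf p x \<in> {0..1}"
proof -
  note c = density_cdf[OF assms]
  have cc: "continuous_on {0..1} (cdf p)" using c(1) by (intro DERIV_continuous_on)
  show "continuous_on {0..1} (cdf p)" by fact
  have mono: "cdf p a < cdf p b" if "a \<in> {0..1}" "b \<in> {0..1}" "a < b" for a b
    using c(4) that by auto
  have inj: "inj_on (cdf p) {0..1}"
    by (metis inj_on_def linorder_neqE_linordered_idom mono order_less_irrefl)
  have rng: "cdf p x \<in> {0..1}" if "x \<in> {0..1}" for x
    using mono[of 0 x] mono[of x 1] that c(2,3) by (cases "x = 0"; cases "x = 1") auto
  show "\<And>x. x \<in> {0..1} \<Longrightarrow> cdf p x \<in> {0..1}" by (rule rng)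
  have img: "cdf p ` {0..1} = {0..1}"
  proof
    show "cdf p ` {0..1} \<subseteq> {0..1}" using rng by auto
    show "{0..1} \<subseteq> cdf p ` {0..1}"
    proof
      fix y :: real assume "y \<in> {0..1}"
      then obtain x where "0 \<le> x" "x \<le> 1" "cdf p x = y"
        using IVT'[of "cdf p" 0 y 1] cc c(2,3) by auto
      then show "y \<in> cdf p ` {0..1}" by auto
    qed
  qed
  show inv1: "inv_cdf p s \<in> {0..1} \<and> cdf p (inv_cdf p s) = s" if "s \<in> {0..1}" for s
    unfolding inv_cdf_def using img that inj
    by (metis f_the_inv_into_f the_inv_into_into subset_refl)
  show inv2: "inv_cdf p (cdf p x) = x" if "x \<in> {0..1}" for x
    unfolding inv_cdf_def using inj that by (rule the_inv_into_f_f)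
  show "inv_cdf p s \<in> {0<..<1}" if "s \<in> {0<..<1}" for s
  proof -
    have "s \<in> {0..1}" using that by auto
    from inv1[OF this] c(2,3) that show ?thesis
      by (metis atLeastAtMost_iff greaterThanLessThan_iff less_eq_real_def order_less_irrefl)
  qed
  show "continuous_on {0..1} (inv_cdf p)"
    using continuous_on_inv[OF cc compact_Icc, of "inv_cdf p"] inv2 img by auto
qed

lemma density_sub:
  assumes "smooth_pos_density p" "continuous_on {0..1} h"
  shows "integral {0..1} (\<lambda>x. h x * p x) = integral {0..1} (\<lambda>s. h (inv_cdf p s))"
proof -
  note c = density_cdf[OF assms(1)] and iv = density_inv[OF assms(1)]
  have hc: "continuous_on {0..1} (\<lambda>s. h (inv_cdf p s))"
  proof (rule continuous_on_compose2[OF assms(2) iv(4)])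
    show "inv_cdf p ` {0..1} \<subseteq> {0..1}" using iv(1) by auto
  qed
  have "((\<lambda>x. p x *\<^sub>R h (inv_cdf p (cdf p x))) has_integral integral {cdf p 0..cdf p 1} (\<lambda>s. h (inv_cdf p s))) {0..1}"
    by (rule has_integral_substitution[where c=0 and d=1]) (use c iv hc in auto)
  then have "integral {0..1} (\<lambda>x. p x * h (inv_cdf p (cdf p x))) = integral {0..1} (\<lambda>s. h (inv_cdf p s))"
    using c by (simp add: integral_unique)
  moreover have "integral {0..1} (\<lambda>x. p x * h (inv_cdf p (cdf p x))) = integral {0..1} (\<lambda>x. h x * p x)"
    by (rule integral_cong) (use iv(2) in auto)
  ultimately show ?thesis by simp
qed



lemma cont_comp:
  assumes "continuous_on A f" "continuous_on B g" "\<And>x. x \<in> B \<Longrightarrow> g x \<in> A"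
  shows "continuous_on B (\<lambda>x. f (g x))"
  using continuous_on_compose2[OF assms(1,2)] assms(3) by blast

lemma icont: "continuous_on {0..1::real} (f::real\<Rightarrow>real) \<Longrightarrow> f integrable_on {0..1}"
  by (rule integrable_continuous_real)

lemma deriv_int:
  assumes "\<forall>x\<in>{a..b}. (f has_real_derivative f1 x) (at x within {a..b})" "x \<in> {a<..<b}"
  shows "deriv f x = f1 x"
  using within_interior_at[of f "f1 x" x a b] assms by (auto intro: DERIV_imp_deriv)

lemma part1:
  assumes P: "smooth_pos_density p" and Q: "smooth_pos_density q" and V: "smooth_on {0..1} V"
  shows "transport_bregman (potential_energy V) (potential_fv V) p q =
            integral {0..1} (\<lambda>s. bregman V (inv_cdf p s) (inv_cdf q s))"
proof -
  obtain V1 where V1: "\<forall>x\<in>{0..1}. (V has_real_derivative V1 x) (at x within {0..1})"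
    and V1c: "continuous_on {0..1} V1" and Vc: "continuous_on {0..1} V"
    using smooth_D1[OF V] by blast
  note ip = density_inv[OF P] and iq = density_inv[OF Q]
  define X where "X = inv_cdf q"
  define Y where "Y = inv_cdf p"
  have dV: "deriv V x = V1 x" if "x \<in> {0<..<1}" for x using deriv_int[OF V1 that] .
  have Xc: "continuous_on {0..1} X" and Yc: "continuous_on {0..1} Y" using ip iq by (simp_all add: X_def Y_def)
  have Xr: "X s \<in> {0..1}" if "s \<in> {0..1}" for s using iq that X_def by auto
  have Yr: "Y s \<in> {0..1}" if "s \<in> {0..1}" for s using ip that Y_def by auto
  have c1: "continuous_on {0..1} (\<lambda>s. V (Y s))" by (rule cont_comp[OF Vc Yc Yr])
  have c2: "continuous_on {0..1} (\<lambda>s. V (X s))" by (rule cont_comp[OF Vc Xc Xr])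
  have c3: "continuous_on {0..1} (\<lambda>s. V1 (X s) * (Y s - X s))"
    by (intro continuous_intros cont_comp[OF V1c Xc Xr] Xc Yc)
  have Tc: "continuous_on {0..1} (\<lambda>x. Y (cdf q x))"
    by (rule cont_comp[OF Yc iq(5)]) (use iq in auto)
  have A: "potential_energy V p = integral {0..1} (\<lambda>s. V (Y s))"
    unfolding potential_energy_def Y_def by (rule density_sub[OF P Vc])
  have B: "potential_energy V q = integral {0..1} (\<lambda>s. V (X s))"
    unfolding potential_energy_def X_def by (rule density_sub[OF Q Vc])
  have C: "integral {0..1} (\<lambda>x. deriv (potential_fv V q) x * (ot_map p q x - x) * q x)
      = integral {0..1} (\<lambda>s. V1 (X s) * (Y s - X s))"
  proof -
    have "integral {0..1} (\<lambda>x. deriv (potential_fv V q) x * (ot_map p q x - x) * q x)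
        = integral {0..1} (\<lambda>x. (V1 x * (Y (cdf q x) - x)) * q x)"
      by (rule int01_cong) (simp add: potential_fv_def[abs_def] dV ot_map_def Y_def)
    also have "\<dots> = integral {0..1} (\<lambda>s. V1 (X s) * (Y (cdf q (X s)) - X s))"
      unfolding X_def by (rule density_sub[OF Q]) (intro continuous_intros V1c Tc)
    also have "\<dots> = integral {0..1} (\<lambda>s. V1 (X s) * (Y s - X s))"
      by (rule integral_cong) (use iq in \<open>auto simp: X_def\<close>)
    finally show ?thesis .
  qed
  have "integral {0..1} (\<lambda>s. bregman V (Y s) (X s))
      = integral {0..1} (\<lambda>s. V (Y s) - V (X s) - V1 (X s) * (Y s - X s))"
    by (rule int01_cong) (use iq in \<open>auto simp: bregman_def dV X_def\<close>)
  also have "\<dots> = integral {0..1} (\<lambda>s. V (Y s)) - integral {0..1} (\<lambda>s. V (X s))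
        - integral {0..1} (\<lambda>s. V1 (X s) * (Y s - X s))"
    using icont[OF c1] icont[OF c2] icont[OF c3]
    by (simp add: integral_diff integrable_diff)
  finally show ?thesis
    unfolding transport_bregman_def A B C by (simp add: X_def Y_def)
qed



lemma density_basic:
  assumes "smooth_pos_density p"
  obtains p1 where "\<forall>x\<in>{0..1}. (p has_real_derivative p1 x) (at x within {0..1})"
    "continuous_on {0..1} p1" "continuous_on {0..1} p" "\<And>x. x \<in> {0..1} \<Longrightarrow> p x > 0"
  using assms smooth_D1 unfolding smooth_pos_density_def by blast

lemma inv_cdf_deriv:
  assumes P: "smooth_pos_density p" and s: "s \<in> {0<..<1}"
  shows "(inv_cdf p has_real_derivative inverse (p (inv_cdf p s))) (at s)"
proof (rule DERIV_inverse_function[where f="cdf p" and a=0 and b=1])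
  note ip = density_inv[OF P] and c = density_cdf[OF P]
  obtain p1 where "\<And>x. x \<in> {0..1} \<Longrightarrow> p x > 0" using density_basic[OF P] by blast
  have Ys: "inv_cdf p s \<in> {0<..<1}" using ip(3) s .
  then show "p (inv_cdf p s) \<noteq> 0" using \<open>\<And>x. x \<in> {0..1} \<Longrightarrow> p x > 0\<close>[of "inv_cdf p s"] by auto
  show "(cdf p has_real_derivative p (inv_cdf p s)) (at (inv_cdf p s))"
    using within_interior_at[OF c(1) Ys] Ys by auto
  show "0 < s" "s < 1" using s by auto
  show "cdf p (inv_cdf p y) = y" if "0 < y" "y < 1" for y using ip(1)[of y] that by auto
  show "isCont (inv_cdf p) s" using continuous_on_interior[OF ip(4)] s by auto
qed

lemma part3:
  assumes P: "smooth_pos_density p" and Q: "smooth_pos_density q" and U: "C2_on {0<..} U"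
  shows "transport_bregman (internal_energy U) (internal_fv U) p q =
            integral {0..1} (\<lambda>s. bregman (\<lambda>z. z * U (1 / z))
               (deriv (inv_cdf p) s) (deriv (inv_cdf q) s))"
proof -
  obtain f1 f2 where U1: "\<And>z. z > 0 \<Longrightarrow> (U has_real_derivative f1 z) (at z)"
    and U2: "\<And>z. z > 0 \<Longrightarrow> (f1 has_real_derivative f2 z) (at z)"
    and f2c: "continuous_on {0<..} f2"
    using U unfolding C2_on_def by (auto simp: at_within_open[of _ "{0<..}"])
  have f1c: "continuous_on {0<..} f1"
    by (rule DERIV_continuous_on) (use U2 has_field_derivative_at_within in blast)
  have Uc: "continuous_on {0<..} U"
    by (rule DERIV_continuous_on) (use U1 has_field_derivative_at_within in blast)
  have dU: "deriv U z = f1 z" if "z > 0" for z using U1[OF that] by (rule DERIV_imp_deriv)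
  obtain p1 where p1: "\<forall>x\<in>{0..1}. (p has_real_derivative p1 x) (at x within {0..1})"
    and pc: "continuous_on {0..1} p" and ppos: "\<And>x. x \<in> {0..1} \<Longrightarrow> p x > 0"
    using density_basic[OF P] by blast
  obtain q1 where q1: "\<forall>x\<in>{0..1}. (q has_real_derivative q1 x) (at x within {0..1})"
    and q1c: "continuous_on {0..1} q1" and qc: "continuous_on {0..1} q" and qpos: "\<And>x. x \<in> {0..1} \<Longrightarrow> q x > 0"
    using density_basic[OF Q] by blast
  note ip = density_inv[OF P] and iq = density_inv[OF Q] and cq = density_cdf[OF Q] and cp = density_cdf[OF P]
  define X where "X = inv_cdf q"
  define Y where "Y = inv_cdf p"
  define T where "T = (\<lambda>x. Y (cdf q x))"
  define \<phi> where "\<phi> = (\<lambda>x. U (q x) - f1 (q x) * q x)"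
  have Xc: "continuous_on {0..1} X" and Yc: "continuous_on {0..1} Y" using ip iq by (simp_all add: X_def Y_def)
  have Xr: "X s \<in> {0..1}" if "s \<in> {0..1}" for s using iq that X_def by auto
  have Yr: "Y s \<in> {0..1}" if "s \<in> {0..1}" for s using ip that Y_def by auto
  have Tc: "continuous_on {0..1} T" unfolding T_def
    by (rule cont_comp[OF Yc iq(5)]) (use iq in auto)
  have Tr: "T x \<in> {0..1}" if "x \<in> {0..1}" for x using Yr iq(6) that T_def by auto
  have TX: "T (X s) = Y s" if "s \<in> {0..1}" for s using iq(1) that by (simp add: T_def X_def)
  have T0: "T 0 = 0" and T1: "T 1 = 1"
    using ip(2)[of 0] ip(2)[of 1] cp(2,3) cq(2,3) by (auto simp: T_def Y_def)
  have pne: "\<forall>x\<in>{0..1}. p x \<noteq> 0" using ppos by (metis less_irrefl)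
  have qne: "\<forall>x\<in>{0..1}. q x \<noteq> 0" using qpos by (metis less_irrefl)
  have qr: "q x \<in> {0<..}" if "x \<in> {0..1}" for x using qpos that by auto
  have pr: "p x \<in> {0<..}" if "x \<in> {0..1}" for x using ppos that by auto
  have Uqc: "continuous_on {0..1} (\<lambda>x. U (q x))" by (rule cont_comp[OF Uc qc qr])
  have f1qc: "continuous_on {0..1} (\<lambda>x. f1 (q x))" by (rule cont_comp[OF f1c qc qr])
  have f2qc: "continuous_on {0..1} (\<lambda>x. f2 (q x))" by (rule cont_comp[OF f2c qc qr])
  have \<phi>c: "continuous_on {0..1} \<phi>" unfolding \<phi>_def by (intro continuous_intros Uqc f1qc qc)
  have pTc: "continuous_on {0..1} (\<lambda>x. p (T x))" by (rule cont_comp[OF pc Tc Tr])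
  have ipTc: "continuous_on {0..1} (\<lambda>x. inverse (p (T x)))"
    by (rule continuous_on_inverse[OF pTc]) (use ppos Tr in force)
  have iqc: "continuous_on {0..1} (\<lambda>x. inverse (q x))"
    by (rule continuous_on_inverse[OF qc]) (use qpos in force)
  have Ep: "internal_energy U p = integral {0..1} (\<lambda>s. U (p (Y s)) / p (Y s))"
  proof -
    have "internal_energy U p = integral {0..1} (\<lambda>x. (U (p x) / p x) * p x)"
      unfolding internal_energy_def by (rule integral_cong) (use ppos in force)
    also have "\<dots> = integral {0..1} (\<lambda>s. U (p (Y s)) / p (Y s))"
      unfolding Y_def
      by (rule density_sub[OF P]) (intro continuous_intros cont_comp[OF Uc pc pr] pc, use pne in auto)
    finally show ?thesis .
  qed
  have Eq: "internal_energy U q = integral {0..1} (\<lambda>s. U (q (X s)) / q (X s))"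
  proof -
    have "internal_energy U q = integral {0..1} (\<lambda>x. (U (q x) / q x) * q x)"
      unfolding internal_energy_def by (rule integral_cong) (use qpos in force)
    also have "\<dots> = integral {0..1} (\<lambda>s. U (q (X s)) / q (X s))"
      unfolding X_def
      by (rule density_sub[OF Q]) (intro continuous_intros Uqc qc, use qne in auto)
    finally show ?thesis .
  qed
  have qd: "(q has_real_derivative q1 x) (at x)" if "x \<in> {0<..<1}" for x
    using within_interior_at[of q "q1 x" x 0 1] q1 that by auto
  have dfv: "deriv (internal_fv U q) x = f2 (q x) * q1 x" if x: "x \<in> {0<..<1}" for x
  proof -
    have "((\<lambda>x. f1 (q x)) has_real_derivative f2 (q x) * q1 x) (at x)"
      by (rule DERIV_chain2[OF U2 qd[OF x]]) (use qpos x in auto)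
    then have "(internal_fv U q has_real_derivative f2 (q x) * q1 x) (at x)"
      by (rule has_field_derivative_transform_within_open[where S="{0<..<1}"])
         (use x qpos dU in \<open>auto simp: internal_fv_def\<close>)
    then show ?thesis by (rule DERIV_imp_deriv)
  qed
  have \<phi>d: "(\<phi> has_real_derivative - (q x * f2 (q x) * q1 x)) (at x)" if x: "x \<in> {0<..<1}" for x
  proof -
    have qx: "q x > 0" using qpos x by auto
    have h1: "((\<lambda>x. U (q x)) has_real_derivative f1 (q x) * q1 x) (at x)"
      by (rule DERIV_chain2[OF U1[OF qx] qd[OF x]])
    have h2: "((\<lambda>x. f1 (q x)) has_real_derivative f2 (q x) * q1 x) (at x)"
      by (rule DERIV_chain2[OF U2[OF qx] qd[OF x]])
    show ?thesis unfolding \<phi>_def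
      by (rule DERIV_cong[OF DERIV_diff[OF h1 DERIV_mult[OF h2 qd[OF x]]]]) (simp add: algebra_simps)
  qed
  have Td: "(T has_real_derivative inverse (p (T x)) * q x) (at x)" if x: "x \<in> {0<..<1}" for x
  proof -
    have cx: "cdf q x \<in> {0<..<1}"
      using cq(4)[of 0 x] cq(4)[of x 1] cq(2,3) x by auto
    have "(cdf q has_real_derivative q x) (at x)"
      using within_interior_at[OF cq(1)] x by auto
    from DERIV_chain2[OF inv_cdf_deriv[OF P cx] this] show ?thesis by (simp add: T_def Y_def)
  qed
  define A where "A = (\<lambda>x. - (q x * f2 (q x) * q1 x) * (T x - x))"
  define B where "B = (\<lambda>x. \<phi> x * (inverse (p (T x)) * q x - 1))"
  have Ac: "continuous_on {0..1} A" unfolding A_def by (intro continuous_intros qc f2qc q1c Tc)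
  have Bc: "continuous_on {0..1} B" unfolding B_def by (intro continuous_intros \<phi>c ipTc qc)
  have ftc: "((\<lambda>x. A x + B x) has_integral (\<phi> 1 * (T 1 - 1) - \<phi> 0 * (T 0 - 0))) {0..1}"
  proof (rule fundamental_theorem_of_calculus_interior[where f="\<lambda>x. \<phi> x * (T x - x)"])
    show "continuous_on {0..1} (\<lambda>x. \<phi> x * (T x - x))" by (intro continuous_intros \<phi>c Tc)
    fix x :: real assume x: "x \<in> {0<..<1}"
    have "((\<lambda>x. \<phi> x * (T x - x)) has_real_derivative A x + B x) (at x)"
      by (rule DERIV_cong[OF DERIV_mult[OF \<phi>d[OF x] DERIV_diff[OF Td[OF x] DERIV_ident]]])
         (simp add: A_def B_def algebra_simps)
    then show "((\<lambda>x. \<phi> x * (T x - x)) has_vector_derivative A x + B x) (at x)"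
      by (simp add: has_real_derivative_iff_has_vector_derivative)
  qed simp
  then have AB: "integral {0..1} A + integral {0..1} B = 0"
    using T0 T1 icont[OF Ac] icont[OF Bc] by (simp add: integral_unique integral_add[symmetric])
  have L: "integral {0..1} (\<lambda>x. deriv (internal_fv U q) x * (ot_map p q x - x) * q x)
      = integral {0..1} (\<lambda>s. \<phi> (X s) * (inverse (p (Y s)) - inverse (q (X s))))"
  proof -
    have "integral {0..1} (\<lambda>x. deriv (internal_fv U q) x * (ot_map p q x - x) * q x)
        = integral {0..1} (\<lambda>x. - A x)"
      by (rule int01_cong) (simp add: dfv A_def ot_map_def T_def Y_def algebra_simps)
    also have "\<dots> = integral {0..1} B" using AB by (simp add: integral_neg icont[OF Ac])
    also have "\<dots> = integral {0..1} (\<lambda>x. (\<phi> x * (inverse (p (T x)) - inverse (q x))) * q x)"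
      by (rule integral_cong) (use qpos in \<open>force simp: B_def algebra_simps\<close>)
    also have "\<dots> = integral {0..1} (\<lambda>s. \<phi> (X s) * (inverse (p (T (X s))) - inverse (q (X s))))"
      unfolding X_def by (rule density_sub[OF Q]) (intro continuous_intros \<phi>c ipTc iqc)
    also have "\<dots> = integral {0..1} (\<lambda>s. \<phi> (X s) * (inverse (p (Y s)) - inverse (q (X s))))"
      by (rule integral_cong) (use TX in auto)
    finally show ?thesis .
  qed
  have dUt: "deriv (\<lambda>z. z * U (1 / z)) (inverse a) = U a - f1 a * a" if a: "a > 0" for a
  proof -
    have "((\<lambda>z. z * U (1 / z)) has_real_derivative U a - f1 a * a) (at (inverse a))"
    proof -
      have dz: "((\<lambda>z. 1 / z) has_real_derivative - (a * a)) (at (inverse a))"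
        using DERIV_inverse[of "inverse a"] a by (simp add: divide_inverse power2_eq_square)
      have ia: "1 / inverse a = a" by (simp add: divide_inverse)
      from DERIV_chain2[OF _ dz, of U "f1 a"] U1[OF a]
      have "((\<lambda>z. U (1 / z)) has_real_derivative f1 a * - (a * a)) (at (inverse a))" by (simp add: ia)
      from DERIV_mult[OF DERIV_ident this] show ?thesis
        by (rule DERIV_cong) (use a in \<open>simp add: field_simps\<close>)
    qed
    then show ?thesis by (rule DERIV_imp_deriv)
  qed
  have R: "integral {0..1} (\<lambda>s. bregman (\<lambda>z. z * U (1 / z)) (deriv (inv_cdf p) s) (deriv (inv_cdf q) s))
      = integral {0..1} (\<lambda>s. U (p (Y s)) / p (Y s) - U (q (X s)) / q (X s)
          - \<phi> (X s) * (inverse (p (Y s)) - inverse (q (X s))))"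
  proof (rule int01_cong)
    fix s :: real assume s: "s \<in> {0<..<1}"
    have py: "p (Y s) > 0" using ppos ip(3)[OF s] by (auto simp: Y_def)
    have qx: "q (X s) > 0" using qpos iq(3)[OF s] by (auto simp: X_def)
    have "deriv (inv_cdf p) s = inverse (p (Y s))" unfolding Y_def
      by (rule DERIV_imp_deriv[OF inv_cdf_deriv[OF P s]])
    moreover have "deriv (inv_cdf q) s = inverse (q (X s))" unfolding X_def
      by (rule DERIV_imp_deriv[OF inv_cdf_deriv[OF Q s]])
    ultimately show "bregman (\<lambda>z. z * U (1 / z)) (deriv (inv_cdf p) s) (deriv (inv_cdf q) s)
      = U (p (Y s)) / p (Y s) - U (q (X s)) / q (X s) - \<phi> (X s) * (inverse (p (Y s)) - inverse (q (X s)))"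
      using dUt[OF qx] py qx by (simp add: bregman_def \<phi>_def divide_inverse mult.commute)
  qed
  have c1: "continuous_on {0..1} (\<lambda>s. U (p (Y s)) / p (Y s))"
  proof -
    have "continuous_on {0..1} (\<lambda>x. U (p x) / p x)"
      by (intro continuous_intros cont_comp[OF Uc pc pr] pc) (use pne in auto)
    from cont_comp[OF this Yc Yr] show ?thesis .
  qed
  have c2: "continuous_on {0..1} (\<lambda>s. U (q (X s)) / q (X s))"
  proof -
    have "continuous_on {0..1} (\<lambda>x. U (q x) / q x)"
      by (intro continuous_intros Uqc qc) (use qne in auto)
    from cont_comp[OF this Xc Xr] show ?thesis .
  qed
  have c3: "continuous_on {0..1} (\<lambda>s. \<phi> (X s) * (inverse (p (Y s)) - inverse (q (X s))))"
  proof -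
    have nz: "\<forall>s\<in>{0..1}. p (Y s) \<noteq> 0" using pne Yr by blast
    have "continuous_on {0..1} (\<lambda>s. inverse (p (Y s)))"
      using continuous_on_inverse[OF cont_comp[OF pc Yc Yr] nz] .
    then show ?thesis
      using cont_comp[OF \<phi>c Xc Xr] cont_comp[OF iqc Xc Xr]
      by (intro continuous_on_mult continuous_on_diff) auto
  qed
  show ?thesis
    unfolding transport_bregman_def Ep Eq L R
    using icont[OF c1] icont[OF c2] icont[OF c3]
    by (simp add: integral_diff integrable_diff)
qed



lemma cont_fst: "continuous_on A g \<Longrightarrow> continuous_on (A \<times> B) (\<lambda>z. g (fst z))"
  by (rule continuous_on_compose2[OF _ continuous_on_fst]) auto

lemma cont_snd: "continuous_on B g \<Longrightarrow> continuous_on (A \<times> B) (\<lambda>z. g (snd z))"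
  by (rule continuous_on_compose2[OF _ continuous_on_snd]) auto

lemma jc:
  fixes a b F :: "real \<Rightarrow> real"
  assumes "continuous_on {0..1} a" "continuous_on {0..1} b"
    "\<And>s t. s \<in> {0..1} \<Longrightarrow> t \<in> {0..1} \<Longrightarrow> a s - b t \<in> {-1..1}" "continuous_on {-1..1} F"
  shows "continuous_on ({0..1::real}\<times>{0..1::real}) (\<lambda>z. F (a (fst z) - b (snd z)))"
proof (rule continuous_on_compose2[OF assms(4)])
  show "continuous_on ({0..1}\<times>{0..1}) (\<lambda>z. a (fst z) - b (snd z))"
    by (rule continuous_on_diff[OF cont_fst[OF assms(1), of "{0..1}"] cont_snd[OF assms(2), of "{0..1}"]])
qed (use assms(3) in auto)

lemma pcont:
  fixes f :: "real \<Rightarrow> real \<Rightarrow> real"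
  assumes "continuous_on ({0..1}\<times>{0..1}) (\<lambda>z. f (fst z) (snd z) :: real)"
  shows "continuous_on {0..1::real} (\<lambda>x. integral {0..1::real} (f x))"
  using integral_continuous_on_param[of "{0..1}" 0 1 f] assms by (simp add: split_beta)

lemma swap01:
  fixes f :: "real \<Rightarrow> real \<Rightarrow> real"
  assumes "continuous_on ({0..1}\<times>{0..1}) (\<lambda>z. f (fst z) (snd z) :: real)"
  shows "integral {0..1::real} (\<lambda>x. integral {0..1::real} (f x)) = integral {0..1} (\<lambda>y. integral {0..1} (\<lambda>x. f x y))"
  using integral_swap_continuous[of 0 0 1 1 f] assms by (simp add: split_beta cbox_Pair_eq)

lemma sub_in01: "x \<in> {0..1} \<Longrightarrow> y \<in> {0..1} \<Longrightarrow> x - y \<in> {-1..(1::real)}" by auto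

lemma energy_W:
  assumes P: "smooth_pos_density p" and Wc: "continuous_on {-1..1} W"
  shows "interaction_energy W p = 1/2 * integral {0..1} (\<lambda>s. integral {0..1} (\<lambda>t. W (inv_cdf p s - inv_cdf p t)))"
proof -
  obtain p1 where pc: "continuous_on {0..1} p" using density_basic[OF P] by blast
  note ip = density_inv[OF P]
  define Y where "Y = inv_cdf p"
  have Yc: "continuous_on {0..1} Y" using ip by (simp add: Y_def)
  have Yr: "Y s \<in> {0..1}" if "s \<in> {0..1}" for s using ip that Y_def by auto
  define G where "G = (\<lambda>x. integral {0..1} (\<lambda>t. W (x - Y t)))"
  have Gc: "continuous_on {0..1} G" unfolding G_def
  proof (rule pcont[where f="\<lambda>x t. W (x - Y t)"])
    show "continuous_on ({0..1} \<times> {0..1}) (\<lambda>z. W (fst z - Y (snd z)))"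
    proof -
      have "\<And>s t. s \<in> {0..1} \<Longrightarrow> t \<in> {0..1} \<Longrightarrow> s - Y t \<in> {-1..1}"
        using Yr by fastforce
      from jc[of "\<lambda>x. x" Y, OF continuous_on_id Yc this Wc] show ?thesis by simp
    qed
  qed
  have inner: "integral {0..1} (\<lambda>y. W (x - y) * p x * p y) = p x * G x" if x: "x \<in> {0..1}" for x
  proof -
    have "integral {0..1} (\<lambda>y. W (x - y) * p x * p y) = integral {0..1} (\<lambda>y. (p x * W (x - y)) * p y)"
      by (simp add: mult_ac)
    also have "\<dots> = integral {0..1} (\<lambda>t. p x * W (x - Y t))" unfolding Y_def
    proof (rule density_sub[OF P])
      have "continuous_on {0..1} (\<lambda>y. W (x - y))"
        by (rule cont_comp[OF Wc]) (use x in \<open>auto intro: continuous_on_diff continuous_on_const continuous_on_id\<close>)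
      then show "continuous_on {0..1} (\<lambda>y. p x * W (x - y))" by (intro continuous_intros)
    qed
    also have "\<dots> = p x * G x" by (simp add: G_def)
    finally show ?thesis .
  qed
  have "integral {0..1} (\<lambda>x. integral {0..1} (\<lambda>y. W (x - y) * p x * p y)) = integral {0..1} (\<lambda>x. G x * p x)"
    by (rule integral_cong, subst inner, assumption, simp add: mult.commute)
  then have "interaction_energy W p = 1/2 * integral {0..1} (\<lambda>x. G x * p x)"
    unfolding interaction_energy_def by simp
  also have "integral {0..1} (\<lambda>x. G x * p x) = integral {0..1} (\<lambda>s. G (Y s))"
    unfolding Y_def by (rule density_sub[OF P Gc])
  finally show ?thesis by (simp add: G_def Y_def)
qed

lemma jc2:
  fixes a b F :: "real \<Rightarrow> real"
  assumes "continuous_on {0..1} a" "continuous_on {0..1} b"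
    "\<And>s t. s \<in> {0..1} \<Longrightarrow> t \<in> {0..1} \<Longrightarrow> a s - b t \<in> {-1..1}" "continuous_on {-1..1} F"
  shows "continuous_on ({0..1::real}\<times>{0..1::real}) (\<lambda>z. F (a (snd z) - b (fst z)))"
proof (rule continuous_on_compose2[OF assms(4)])
  show "continuous_on ({0..1}\<times>{0..1}) (\<lambda>z. a (snd z) - b (fst z))"
    by (rule continuous_on_diff[OF cont_snd[OF assms(1), of "{0..1::real}"] cont_fst[OF assms(2), of "{0..1::real}"]])
qed (use assms(3) in auto)

lemma odd_deriv:
  fixes W W1 :: "real \<Rightarrow> real"
  assumes W1: "\<forall>z\<in>{-1..1}. (W has_real_derivative W1 z) (at z within {-1..1})"
    and ev: "\<forall>z\<in>{-1..1}. W (- z) = W z" and z: "z \<in> {-1..1}"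
  shows "W1 (- z) = - W1 z"
proof -
  have mz: "- z \<in> {-1..1}" using z by auto
  have d0: "(W has_real_derivative W1 (- z)) (at (- z) within (uminus ` {-1..1}))"
    using W1 mz by simp
  have d1: "((W \<circ> uminus) has_real_derivative W1 (- z) * (- 1)) (at z within {-1..1})"
    by (rule DERIV_image_chain[OF d0]) (auto intro!: derivative_eq_intros)
  have d2: "(W has_real_derivative W1 (- z) * (- 1)) (at z within {-1..1})"
    by (rule has_field_derivative_transform_within[OF d1 zero_less_one z]) (use ev in auto)
  have "z islimpt {-1..1::real}" using z by simp
  then have nb: "at z within {-1..1} \<noteq> bot"
    using trivial_limit_within by blast
  have "W1 (- z) * (- 1) = W1 z"
    by (rule has_field_derivative_unique[OF d2 _ nb]) (use W1 z in auto)
  then show ?thesis by simp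
qed

lemma part2:
  assumes P: "smooth_pos_density p" and Q: "smooth_pos_density q" and W: "smooth_on {-1..1} W"
    and ev: "\<forall>z\<in>{-1..1}. W (- z) = W z"
  shows "transport_bregman (interaction_energy W) (interaction_fv W) p q =
            1/2 * integral {0..1} (\<lambda>s. integral {0..1} (\<lambda>t.
               bregman W (inv_cdf p s - inv_cdf p t) (inv_cdf q s - inv_cdf q t)))"
proof -
  obtain W1 where W1: "\<forall>z\<in>{-1..1}. (W has_real_derivative W1 z) (at z within {-1..1})"
    and W1c: "continuous_on {-1..1} W1" and Wc: "continuous_on {-1..1} W"
    using smooth_D1[OF W] by blast
  have dW: "deriv W z = W1 z" if "z \<in> {-1<..<1}" for z using deriv_int[OF W1 that] .
  have Wd: "(W has_real_derivative W1 z) (at z)" if "z \<in> {-1<..<1}" for z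
    using within_interior_at[of W "W1 z" z "-1" 1] W1 that by auto
  have odd: "W1 (- z) = - W1 z" if "z \<in> {-1..1}" for z using odd_deriv[OF W1 ev that] .
  obtain q1 where qc: "continuous_on {0..1} q" using density_basic[OF Q] by blast
  note ip = density_inv[OF P] and iq = density_inv[OF Q]
  define X where "X = inv_cdf q"
  define Y where "Y = inv_cdf p"
  define T where "T = (\<lambda>x. Y (cdf q x))"
  have Xc: "continuous_on {0..1} X" and Yc: "continuous_on {0..1} Y" using ip iq by (simp_all add: X_def Y_def)
  have Xr: "X s \<in> {0..1}" if "s \<in> {0..1}" for s using iq that X_def by auto
  have Yr: "Y s \<in> {0..1}" if "s \<in> {0..1}" for s using ip that Y_def by auto
  have Xi: "X s \<in> {0<..<1}" if "s \<in> {0<..<1}" for s using iq that X_def by auto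
  have Tc: "continuous_on {0..1} T" unfolding T_def
    by (rule cont_comp[OF Yc iq(5)]) (use iq in auto)
  have TX: "T (X s) = Y s" if "s \<in> {0..1}" for s using iq(1) that by (simp add: T_def X_def)
  have XX: "\<And>s t. s \<in> {0..1} \<Longrightarrow> t \<in> {0..1} \<Longrightarrow> X s - X t \<in> {-1..1}" by (rule sub_in01, rule Xr, assumption, rule Xr, assumption)
  have YY: "\<And>s t. s \<in> {0..1} \<Longrightarrow> t \<in> {0..1} \<Longrightarrow> Y s - Y t \<in> {-1..1}" by (rule sub_in01, rule Yr, assumption, rule Yr, assumption)
  have IX: "\<And>s t. s \<in> {0..1} \<Longrightarrow> t \<in> {0..1} \<Longrightarrow> s - X t \<in> {-1..1}" by (rule sub_in01, assumption, rule Xr, assumption)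
  define IP where "IP = integral {0..1} (\<lambda>s. integral {0..1} (\<lambda>t. W (Y s - Y t)))"
  define IQ where "IQ = integral {0..1} (\<lambda>s. integral {0..1} (\<lambda>t. W (X s - X t)))"
  have EP: "interaction_energy W p = 1/2 * IP" unfolding IP_def Y_def by (rule energy_W[OF P Wc])
  have EQ: "interaction_energy W q = 1/2 * IQ" unfolding IQ_def X_def by (rule energy_W[OF Q Wc])
  have dfv: "deriv (interaction_fv W q) x = integral {0..1} (\<lambda>t. W1 (x - t) * q t)" if x: "x \<in> {0<..<1}" for x
  proof -
    have "((\<lambda>x. integral (cbox 0 1) (\<lambda>t. W (x - t) * q t)) has_field_derivative
          integral (cbox 0 1) (\<lambda>t. W1 (x - t) * q t)) (at x within {0<..<1})"
    proof (rule leibniz_rule_field_derivative[where f="\<lambda>x t. W (x - t) * q t" and fx="\<lambda>x t. W1 (x - t) * q t"])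
      fix y t :: real assume y: "y \<in> {0<..<1}" and t: "t \<in> cbox 0 1"
      have yt: "y - t \<in> {-1<..<1}" using y t by auto
      have "((\<lambda>x. W (x - t)) has_real_derivative W1 (y - t)) (at y)"
        by (rule DERIV_cong[OF DERIV_chain2[OF Wd[OF yt] DERIV_diff[OF DERIV_ident DERIV_const]]]) simp
      from DERIV_mult[OF this DERIV_const[of "q t"]]
      have "((\<lambda>x. W (x - t) * q t) has_real_derivative W1 (y - t) * q t) (at y)" by simp
      then show "((\<lambda>x. W (x - t) * q t) has_real_derivative W1 (y - t) * q t) (at y within {0<..<1})"
        by (rule has_field_derivative_at_within)
    next
      fix y :: real assume y: "y \<in> {0<..<1}"
      have "continuous_on {0..1} (\<lambda>t. W (y - t))"
        by (rule cont_comp[OF Wc]) (use y in \<open>auto intro: continuous_on_diff continuous_on_const continuous_on_id\<close>)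
      then have "continuous_on {0..1} (\<lambda>t. W (y - t) * q t)" by (intro continuous_on_mult qc)
      then show "(\<lambda>t. W (y - t) * q t) integrable_on cbox 0 1" using icont by simp
    next
      have "continuous_on ({0..1}\<times>{0..1}) (\<lambda>z. W1 (fst z - snd z) * q (snd z))"
        by (intro continuous_on_mult jc[of "\<lambda>x. x" "\<lambda>x. x", OF continuous_on_id continuous_on_id _ W1c, simplified]
            cont_snd qc)
      then have "continuous_on ({0<..<1}\<times>{0..1}) (\<lambda>z. W1 (fst z - snd z) * q (snd z))"
        by (rule continuous_on_subset) auto
      then show "continuous_on ({0<..<1} \<times> cbox 0 1) (\<lambda>(x, t). W1 (x - t) * q t)"
        by (simp add: split_beta)
    qed (use x in \<open>simp_all add: convex_real_interval\<close>)
    then have "(interaction_fv W q has_real_derivative integral {0..1} (\<lambda>t. W1 (x - t) * q t)) (at x)"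
      using at_within_open[of x "{0<..<1}"] x by (simp add: interaction_fv_def[abs_def])
    then show ?thesis by (rule DERIV_imp_deriv)
  qed
  define K where "K = (\<lambda>x. integral {0..1} (\<lambda>t. W1 (x - X t)))"
  have Kc: "continuous_on {0..1} K" unfolding K_def
    by (rule pcont[where f="\<lambda>x t. W1 (x - X t)"], rule jc[of "\<lambda>x. x" X, OF continuous_on_id Xc IX W1c])
  have HK: "integral {0..1} (\<lambda>t. W1 (x - t) * q t) = K x" if x: "x \<in> {0..1}" for x
    unfolding K_def X_def
  proof (rule density_sub[OF Q])
    show "continuous_on {0..1} (\<lambda>t. W1 (x - t))"
      by (rule cont_comp[OF W1c]) (use x in \<open>auto intro: continuous_on_diff continuous_on_const continuous_on_id\<close>)
  qed
  define a where "a = (\<lambda>s t. W1 (X s - X t) * (Y s - X s))"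
  have ac: "continuous_on ({0..1}\<times>{0..1}) (\<lambda>z. a (fst z) (snd z))" unfolding a_def
    by (intro continuous_on_mult jc[OF Xc Xc XX W1c] cont_fst continuous_on_diff Xc Yc)
  have ac2: "continuous_on ({0..1}\<times>{0..1}) (\<lambda>z. a (snd z) (fst z))" unfolding a_def
    by (intro continuous_on_mult jc2[OF Xc Xc XX W1c] cont_snd continuous_on_diff Xc Yc)
  define L where "L = integral {0..1} (\<lambda>s. integral {0..1} (\<lambda>t. a s t))"
  have Lin: "integral {0..1} (\<lambda>x. deriv (interaction_fv W q) x * (ot_map p q x - x) * q x) = L"
  proof -
    have "integral {0..1} (\<lambda>x. deriv (interaction_fv W q) x * (ot_map p q x - x) * q x)
        = integral {0..1} (\<lambda>x. (K x * (T x - x)) * q x)"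
      by (rule int01_cong) (simp add: dfv HK ot_map_def T_def Y_def)
    also have "\<dots> = integral {0..1} (\<lambda>s. K (X s) * (T (X s) - X s))"
      unfolding X_def by (rule density_sub[OF Q]) (intro continuous_on_mult continuous_on_diff Kc Tc continuous_on_id)
    also have "\<dots> = integral {0..1} (\<lambda>s. K (X s) * (Y s - X s))"
      by (rule integral_cong) (simp add: TX)
    also have "\<dots> = L" unfolding L_def a_def K_def
      by (rule integral_cong) simp
    finally show ?thesis .
  qed
  have L2: "integral {0..1} (\<lambda>s. integral {0..1} (\<lambda>t. a t s)) = L"
    unfolding L_def using swap01[where f="\<lambda>s t. a t s", OF ac2] by simp
  define A1 where "A1 = (\<lambda>s. integral {0..1} (\<lambda>t. W (Y s - Y t)))"
  define A2 where "A2 = (\<lambda>s. integral {0..1} (\<lambda>t. W (X s - X t)))"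
  define B1 where "B1 = (\<lambda>s. integral {0..1} (\<lambda>t. a s t))"
  define B2 where "B2 = (\<lambda>s. integral {0..1} (\<lambda>t. a t s))"
  have A1c: "continuous_on {0..1} A1" unfolding A1_def
    by (rule pcont[where f="\<lambda>s t. W (Y s - Y t)"], rule jc[OF Yc Yc YY Wc])
  have A2c: "continuous_on {0..1} A2" unfolding A2_def
    by (rule pcont[where f="\<lambda>s t. W (X s - X t)"], rule jc[OF Xc Xc XX Wc])
  have B1c: "continuous_on {0..1} B1" unfolding B1_def
    by (rule pcont[where f="\<lambda>s t. a s t"], rule ac)
  have B2c: "continuous_on {0..1} B2" unfolding B2_def
    by (rule pcont[where f="\<lambda>s t. a t s"], rule ac2)
  have inner: "integral {0..1} (\<lambda>t. bregman W (Y s - Y t) (X s - X t)) = A1 s - A2 s - (B1 s + B2 s)"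
    if s: "s \<in> {0<..<1}" for s
  proof -
    have s1: "s \<in> {0..1}" using s by auto
    have "integral {0..1} (\<lambda>t. bregman W (Y s - Y t) (X s - X t))
        = integral {0..1} (\<lambda>t. W (Y s - Y t) - W (X s - X t) - (a s t + a t s))"
    proof (rule integral_cong)
      fix t :: real assume t: "t \<in> {0..1}"
      have "X s - X t \<in> {-1<..<1}" using Xi[OF s] Xr[OF t] by auto
      moreover have "W1 (X t - X s) = - W1 (X s - X t)"
        using odd[of "X s - X t"] XX[OF s1 t] by simp
      ultimately show "bregman W (Y s - Y t) (X s - X t) = W (Y s - Y t) - W (X s - X t) - (a s t + a t s)"
        by (simp add: bregman_def dW a_def algebra_simps)
    qed
    also have "\<dots> = A1 s - A2 s - (B1 s + B2 s)"
    proof -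
      have i1: "(\<lambda>t. W (Y s - Y t)) integrable_on {0..1}"
        by (rule icont, rule cont_comp[OF Wc _ YY[OF s1]])
           (intro continuous_on_diff continuous_on_const Yc)
      have i2: "(\<lambda>t. W (X s - X t)) integrable_on {0..1}"
        by (rule icont, rule cont_comp[OF Wc _ XX[OF s1]])
           (intro continuous_on_diff continuous_on_const Xc)
      have i3: "(\<lambda>t. a s t) integrable_on {0..1}" unfolding a_def
        by (rule icont, intro continuous_on_mult continuous_on_const cont_comp[OF W1c _ XX[OF s1]])
           (intro continuous_on_diff continuous_on_const Xc)
      have XX2: "\<And>t. t \<in> {0..1} \<Longrightarrow> X t - X s \<in> {-1..1}" using XX s1 by blast
      have i4: "(\<lambda>t. a t s) integrable_on {0..1}" unfolding a_def
        by (rule icont, intro continuous_on_mult cont_comp[OF W1c _ XX2] continuous_on_diff Xc Yc continuous_on_const)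
      show ?thesis using i1 i2 i3 i4
        by (simp add: A1_def A2_def B1_def B2_def integral_diff integral_add integrable_diff integrable_add)
    qed
    finally show ?thesis .
  qed
  have "integral {0..1} (\<lambda>s. integral {0..1} (\<lambda>t. bregman W (Y s - Y t) (X s - X t)))
      = integral {0..1} (\<lambda>s. A1 s - A2 s - (B1 s + B2 s))"
    by (rule int01_cong) (rule inner)
  also have "\<dots> = IP - IQ - (L + L)"
    using icont[OF A1c] icont[OF A2c] icont[OF B1c] icont[OF B2c] L2
    by (simp add: integral_diff integral_add integrable_diff integrable_add
        IP_def IQ_def L_def A1_def A2_def B1_def B2_def)
  finally have R: "integral {0..1} (\<lambda>s. integral {0..1} (\<lambda>t. bregman W (Y s - Y t) (X s - X t))) = IP - IQ - (L + L)" .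
  show ?thesis
    unfolding transport_bregman_def EP EQ Lin
    using R by (simp add: X_def Y_def algebra_simps)
qed


theorem mainTheorem3:
  fixes p q :: "real \<Rightarrow> real"
  assumes "smooth_pos_density p" and "smooth_pos_density q"
  shows "(\<forall>V. smooth_on {0..1} V \<longrightarrow>
            transport_bregman (potential_energy V) (potential_fv V) p q =
            integral {0..1} (\<lambda>s. bregman V (inv_cdf p s) (inv_cdf q s)))
       \<and> (\<forall>W. smooth_on {-1..1} W \<longrightarrow> (\<forall>z\<in>{-1..1}. W (- z) = W z) \<longrightarrow>
            transport_bregman (interaction_energy W) (interaction_fv W) p q =
            1/2 * integral {0..1} (\<lambda>s. integral {0..1} (\<lambda>t.
               bregman W (inv_cdf p s - inv_cdf p t) (inv_cdf q s - inv_cdf q t))))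
       \<and> (\<forall>U. C2_on {0<..} U \<longrightarrow>
            transport_bregman (internal_energy U) (internal_fv U) p q =
            integral {0..1} (\<lambda>s. bregman (\<lambda>z. z * U (1 / z))
               (deriv (inv_cdf p) s) (deriv (inv_cdf q) s)))"
  using part1[OF assms] part2[OF assms] part3[OF assms] by blast

end
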